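(* Let $\mathbb{C}_1$ and $\mathbb{C}_2$ be locally small categories whose morphisms are all monomorphisms. Assume that for each $i\in\{1,2\}$ and all $A_i,B_i\in\mathrm{Ob}(\mathbb{C}_i)$ the set $\hom_{\mathbb{C}_i}(A_i,B_i)$ is finite and $t_{\mathbb{C}_i}(A_i)$ is finite. Then for all $A_1\in\mathrm{Ob}(\mathbb{C}_1)$ and $A_2\in\mathrm{Ob}(\mathbb{C}_2)$, $$t_{\mathbb{C}_1\times\mathbb{C}_2}(A_1,A_2)\le t_{\mathbb{C}_1}(A_1)\cdot t_{\mathbb{C}_2}(A_2),$$ and consequently $t^\sim_{\mathbb{C}_1\times\mathbb{C}_2}(A_1,A_2)\le t^\sim_{\mathbb{C}_1}(A_1)\cdot t^\sim_{\mathbb{C}_2}(A_2)$.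
   Context: $\mathbb{C}_1\times\mathbb{C}_2$ is the product category. For a category $\mathbb{C}$, $k\ge2$, $t\ge1$ and objects $A,B,C$: $C\to(B)^A_{k,t}$ means that for every $\chi:\hom(A,C)\to\{0,\dots,k-1\}$ there is $w\in\hom(B,C)$ with $|\chi(w\cdot\hom(A,B))|\le t$. $t_{\mathbb{C}}(A)$ is the least positive integer $n$ such that for all $k\ge2$ and all $B$ there is $C$ with $C\to(B)^A_{k,n}$, and $\infty$ if none exists. For $f,f'\in\hom(A,B)$ let $f\sim_A f'$ iff $f'=f\cdot\alpha$ for some $\alpha\in\mathrm{Aut}(A)$, $\binom{B}{A}=\hom(A,B)/{\sim_A}$, and $w\cdot(f/{\sim_A})=(w\cdot f)/{\sim_A}$. $C\overset{\sim}{\to}(B)^A_{k,t}$ means that for every $\chi:\binom{C}{A}\to\{0,\dots,k-1\}$ there is $w\in\hom(B,C)$ with $|\chi(w\cdot\binom{B}{A})|\le t$; $t^\sim_{\mathbb{C}}(A)$ is the least positive $n$ such that for all $k\ge2$ and all $B$ there is $C$ with $C\overset{\sim}{\to}(B)^A_{k,n}$, and $\infty$ otherwise. *)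

theory Defs
  imports Main "HOL-Library.Extended_Nat"
begin

text \<open>A (locally small) category given by its object set, hom-sets, composition
  (cmp g f = g after f) and identities.\<close>
record ('o, 'm) cat =
  Ob  :: "'o set"
  Hom :: "'o \<Rightarrow> 'o \<Rightarrow> 'm set"
  cmp :: "'m \<Rightarrow> 'm \<Rightarrow> 'm"
  idm :: "'o \<Rightarrow> 'm"

definition is_category :: "('o, 'm) cat \<Rightarrow> bool" where
  "is_category C \<longleftrightarrow>
     (\<forall>A\<in>Ob C. \<forall>B\<in>Ob C. \<forall>D\<in>Ob C. \<forall>f\<in>Hom C A B. \<forall>g\<in>Hom C B D.
         cmp C g f \<in> Hom C A D) \<and>
     (\<forall>A\<in>Ob C. \<forall>B\<in>Ob C. \<forall>D\<in>Ob C. \<forall>E\<in>Ob C.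
        \<forall>f\<in>Hom C A B. \<forall>g\<in>Hom C B D. \<forall>h\<in>Hom C D E.
         cmp C h (cmp C g f) = cmp C (cmp C h g) f) \<and>
     (\<forall>A\<in>Ob C. idm C A \<in> Hom C A A) \<and>
     (\<forall>A\<in>Ob C. \<forall>B\<in>Ob C. \<forall>f\<in>Hom C A B.
         cmp C (idm C B) f = f \<and> cmp C f (idm C A) = f) \<and>
     (\<forall>A\<in>Ob C. \<forall>B\<in>Ob C. \<forall>A'\<in>Ob C. \<forall>B'\<in>Ob C.
         Hom C A B \<inter> Hom C A' B' \<noteq> {} \<longrightarrow> A = A' \<and> B = B')"

definition all_mono :: "('o, 'm) cat \<Rightarrow> bool" where
  "all_mono C \<longleftrightarrow>
     (\<forall>A\<in>Ob C. \<forall>B\<in>Ob C. \<forall>D\<in>Ob C. \<forall>f\<in>Hom C B D. \<forall>g\<in>Hom C A B. \<forall>h\<in>Hom C A B.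
         cmp C f g = cmp C f h \<longrightarrow> g = h)"

definition prod_cat :: "('o1, 'm1) cat \<Rightarrow> ('o2, 'm2) cat \<Rightarrow> ('o1 \<times> 'o2, 'm1 \<times> 'm2) cat" where
  "prod_cat C1 C2 =
     \<lparr> Ob = Ob C1 \<times> Ob C2,
       Hom = (\<lambda>(A1, A2) (B1, B2). Hom C1 A1 B1 \<times> Hom C2 A2 B2),
       cmp = (\<lambda>(g1, g2) (f1, f2). (cmp C1 g1 f1, cmp C2 g2 f2)),
       idm = (\<lambda>(A1, A2). (idm C1 A1, idm C2 A2)) \<rparr>"

definition arrow :: "('o, 'm) cat \<Rightarrow> 'o \<Rightarrow> 'o \<Rightarrow> 'o \<Rightarrow> nat \<Rightarrow> nat \<Rightarrow> bool" where
  "arrow Cat C B A k t \<longleftrightarrow>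
     (\<forall>\<chi> :: 'm \<Rightarrow> nat. \<chi> ` Hom Cat A C \<subseteq> {..<k} \<longrightarrow>
        (\<exists>w\<in>Hom Cat B C.
           finite (\<chi> ` ((\<lambda>f. cmp Cat w f) ` Hom Cat A B)) \<and>
           card (\<chi> ` ((\<lambda>f. cmp Cat w f) ` Hom Cat A B)) \<le> t))"

definition ramsey_deg :: "('o, 'm) cat \<Rightarrow> 'o \<Rightarrow> enat" where
  "ramsey_deg Cat A =
     (let P = (\<lambda>n. 0 < n \<and> (\<forall>k\<ge>2. \<forall>B\<in>Ob Cat. \<exists>C\<in>Ob Cat. arrow Cat C B A k n))
      in if \<exists>n. P n then enat (LEAST n. P n) else \<infinity>)"

definition Aut :: "('o, 'm) cat \<Rightarrow> 'o \<Rightarrow> 'm set" where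
  "Aut Cat A = {\<alpha> \<in> Hom Cat A A. \<exists>\<beta>\<in>Hom Cat A A.
                    cmp Cat \<alpha> \<beta> = idm Cat A \<and> cmp Cat \<beta> \<alpha> = idm Cat A}"

definition cls :: "('o, 'm) cat \<Rightarrow> 'o \<Rightarrow> 'm \<Rightarrow> 'm set" where
  "cls Cat A f = (\<lambda>\<alpha>. cmp Cat f \<alpha>) ` Aut Cat A"

definition binom :: "('o, 'm) cat \<Rightarrow> 'o \<Rightarrow> 'o \<Rightarrow> 'm set set" where
  "binom Cat B A = cls Cat A ` Hom Cat A B"

definition arrow_sim :: "('o, 'm) cat \<Rightarrow> 'o \<Rightarrow> 'o \<Rightarrow> 'o \<Rightarrow> nat \<Rightarrow> nat \<Rightarrow> bool" where
  "arrow_sim Cat C B A k t \<longleftrightarrow>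
     (\<forall>\<chi> :: 'm set \<Rightarrow> nat. \<chi> ` binom Cat C A \<subseteq> {..<k} \<longrightarrow>
        (\<exists>w\<in>Hom Cat B C.
           finite (\<chi> ` ((\<lambda>f. cls Cat A (cmp Cat w f)) ` Hom Cat A B)) \<and>
           card (\<chi> ` ((\<lambda>f. cls Cat A (cmp Cat w f)) ` Hom Cat A B)) \<le> t))"

definition ramsey_deg_sim :: "('o, 'm) cat \<Rightarrow> 'o \<Rightarrow> enat" where
  "ramsey_deg_sim Cat A =
     (let P = (\<lambda>n. 0 < n \<and> (\<forall>k\<ge>2. \<forall>B\<in>Ob Cat. \<exists>C\<in>Ob Cat. arrow_sim Cat C B A k n))
      in if \<exists>n. P n then enat (LEAST n. P n) else \<infinity>)"

end

theory Submission
  imports Defs "HOL-Library.FuncSet"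
begin

definition gP :: "'x set \<Rightarrow> ('w \<Rightarrow> 'x set) \<Rightarrow> 'w set \<Rightarrow> nat \<Rightarrow> nat \<Rightarrow> bool" where
  "gP X T W k t \<longleftrightarrow> (\<forall>\<chi>::'x\<Rightarrow>nat. \<chi> ` X \<subseteq> {..<k} \<longrightarrow>
      (\<exists>w\<in>W. finite (\<chi> ` T w) \<and> card (\<chi> ` T w) \<le> t))"

lemma gP_gen:
  fixes \<chi> :: "'x \<Rightarrow> 'y"
  assumes P: "gP X T W k t" and finY: "finite Y" and cY: "card Y \<le> k"
    and col: "\<chi> ` X \<subseteq> Y" and sub: "\<forall>w\<in>W. T w \<subseteq> X"
  shows "\<exists>w\<in>W. finite (\<chi> ` T w) \<and> card (\<chi> ` T w) \<le> t"
proof -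
  obtain h0 where h0: "bij_betw h0 {0..<card Y} Y" using ex_bij_betw_nat_finite[OF finY] by blast
  define h where "h = inv_into {0..<card Y} h0"
  have h: "bij_betw h Y {0..<card Y}" unfolding h_def by (rule bij_betw_inv_into[OF h0])
  have "(h \<circ> \<chi>) ` X \<subseteq> {..<k}"
  proof
    fix y assume "y \<in> (h \<circ> \<chi>) ` X"
    then obtain x where x: "x \<in> X" "y = h (\<chi> x)" by auto
    then have "\<chi> x \<in> Y" using col by auto
    then have "h (\<chi> x) \<in> {0..<card Y}" using h by (auto simp: bij_betw_def)
    then show "y \<in> {..<k}" using x cY by auto
  qed
  then obtain w where w: "w \<in> W" "finite ((h \<circ> \<chi>) ` T w)" "card ((h \<circ> \<chi>) ` T w) \<le> t"
    using P unfolding gP_def by blast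
  have subY: "\<chi> ` T w \<subseteq> Y" using sub w(1) col by blast
  have inj: "inj_on h (\<chi> ` T w)" using bij_betw_imp_inj_on[OF h] subY by (rule inj_on_subset)
  have fin: "finite (\<chi> ` T w)" using finite_subset[OF subY finY] .
  have "card (\<chi> ` T w) = card (h ` \<chi> ` T w)" using card_image[OF inj] by simp
  also have "\<dots> = card ((h \<circ> \<chi>) ` T w)" by (simp add: image_comp)
  finally show ?thesis using w fin by auto
qed

lemma core:
  fixes \<chi> :: "'a \<times> 'b \<Rightarrow> nat"
  assumes k: "k \<ge> 1" and fin2: "finite XB"
    and P2: "gP XB TB WB KB tb" and KB: "k ^ ta \<le> KB"
    and P1: "gP XA TA WA KA ta" and KA: "k ^ card XB \<le> KA"
    and sub1: "\<forall>w\<in>WA. TA w \<subseteq> XA" and sub2: "\<forall>w\<in>WB. TB w \<subseteq> XB"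
    and col: "\<chi> ` (XA \<times> XB) \<subseteq> {..<k}"
  shows "\<exists>w1\<in>WA. \<exists>w2\<in>WB. finite (\<chi> ` (TA w1 \<times> TB w2)) \<and> card (\<chi> ` (TA w1 \<times> TB w2)) \<le> ta * tb"
proof -
  define \<chi>1 where "\<chi>1 = (\<lambda>x1. restrict (\<lambda>x2. \<chi> (x1, x2)) XB)"
  define Y1 where "Y1 = PiE XB (\<lambda>_. {..<k})"
  have finY1: "finite Y1" using fin2 by (simp add: Y1_def finite_PiE)
  have cardY1: "card Y1 = k ^ card XB" using fin2 by (simp add: Y1_def card_PiE)
  have c1: "\<chi>1 ` XA \<subseteq> Y1" using col unfolding \<chi>1_def Y1_def image_subset_iff by auto
  have "\<exists>w\<in>WA. finite (\<chi>1 ` TA w) \<and> card (\<chi>1 ` TA w) \<le> ta"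
    by (rule gP_gen[OF P1 finY1 _ c1 sub1]) (simp add: cardY1 KA)
  then obtain w1 where w1: "w1 \<in> WA" "finite (\<chi>1 ` TA w1)" "card (\<chi>1 ` TA w1) \<le> ta"
    by blast
  define S where "S = \<chi>1 ` TA w1"
  have finS: "finite S" using w1 S_def by simp
  define \<chi>2 where "\<chi>2 = (\<lambda>x2. restrict (\<lambda>g. g x2) S)"
  define Y2 where "Y2 = PiE S (\<lambda>_. {..<k})"
  have finY2: "finite Y2" using finS by (simp add: Y2_def finite_PiE)
  have "card Y2 = k ^ card S" using finS by (simp add: Y2_def card_PiE)
  also have "\<dots> \<le> k ^ ta" using k w1 S_def by (simp add: power_increasing)
  finally have cardY2: "card Y2 \<le> KB" using KB by simp
  have c2: "\<chi>2 ` XB \<subseteq> Y2"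
  proof
    fix y assume "y \<in> \<chi>2 ` XB"
    then obtain x2 where x2: "x2 \<in> XB" "y = \<chi>2 x2" by auto
    have "\<And>g. g \<in> S \<Longrightarrow> g x2 < k"
    proof -
      fix g assume "g \<in> S"
      then obtain x1 where "x1 \<in> TA w1" "g = \<chi>1 x1" by (auto simp: S_def)
      then have "x1 \<in> XA" "g x2 = \<chi> (x1, x2)" using sub1 w1 x2 by (auto simp: \<chi>1_def)
      then show "g x2 < k" using col x2 by auto
    qed
    then show "y \<in> Y2" using x2 by (auto simp: Y2_def \<chi>2_def)
  qed
  obtain w2 where w2: "w2 \<in> WB" "finite (\<chi>2 ` TB w2)" "card (\<chi>2 ` TB w2) \<le> tb"
    using gP_gen[OF P2 finY2 cardY2 c2 sub2] by blast
  define U where "U = \<chi>2 ` TB w2"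
  have finU: "finite U" using w2 U_def by simp
  have incl: "\<chi> ` (TA w1 \<times> TB w2) \<subseteq> (\<Union>u\<in>U. u ` S)"
  proof
    fix y assume "y \<in> \<chi> ` (TA w1 \<times> TB w2)"
    then obtain x1 x2 where xx: "x1 \<in> TA w1" "x2 \<in> TB w2" "y = \<chi> (x1, x2)" by auto
    have x2X: "x2 \<in> XB" using sub2 w2 xx by auto
    have gS: "\<chi>1 x1 \<in> S" using xx by (simp add: S_def)
    have "y = \<chi>2 x2 (\<chi>1 x1)" using xx x2X gS by (simp add: \<chi>2_def \<chi>1_def)
    then show "y \<in> (\<Union>u\<in>U. u ` S)" using gS xx by (auto simp: U_def)
  qed
  have finUn: "finite (\<Union>u\<in>U. u ` S)" using finU finS by auto
  have "card (\<chi> ` (TA w1 \<times> TB w2)) \<le> card (\<Union>u\<in>U. u ` S)"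
    using card_mono[OF finUn incl] .
  also have "\<dots> \<le> (\<Sum>u\<in>U. card (u ` S))" using card_UN_le[OF finU] .
  also have "\<dots> \<le> (\<Sum>u\<in>U. card S)" by (rule sum_mono) (rule card_image_le[OF finS])
  also have "\<dots> = card U * card S" by simp
  also have "\<dots> \<le> tb * ta" using w1 w2 U_def S_def by (simp add: mult_mono)
  finally show ?thesis using finite_subset[OF incl finUn] w1(1) w2(1) by (auto simp: mult.commute)
qed

lemma cat_comp:
  assumes "is_category C" "A \<in> Ob C" "B \<in> Ob C" "D \<in> Ob C" "f \<in> Hom C A B" "g \<in> Hom C B D"
  shows "cmp C g f \<in> Hom C A D"
  using assms unfolding is_category_def by blast

lemma Hom_prod: "Hom (prod_cat C1 C2) (X1, X2) (Y1, Y2) = Hom C1 X1 Y1 \<times> Hom C2 X2 Y2"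
  by (simp add: prod_cat_def)

lemma cmp_prod: "cmp (prod_cat C1 C2) (g1, g2) (f1, f2) = (cmp C1 g1 f1, cmp C2 g2 f2)"
  by (simp add: prod_cat_def)

lemma Ob_prod: "Ob (prod_cat C1 C2) = Ob C1 \<times> Ob C2"
  by (simp add: prod_cat_def)

lemma Aut_prod: "Aut (prod_cat C1 C2) (A1, A2) = Aut C1 A1 \<times> Aut C2 A2"
  by (auto simp: Aut_def prod_cat_def)

lemma cls_prod: "cls (prod_cat C1 C2) (A1, A2) (f1, f2) = cls C1 A1 f1 \<times> cls C2 A2 f2"
proof -
  have "(\<lambda>\<alpha>. cmp (prod_cat C1 C2) (f1, f2) \<alpha>) = map_prod (cmp C1 f1) (cmp C2 f2)"
    by (auto simp: prod_cat_def)
  then show ?thesis unfolding cls_def Aut_prod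
    by (simp add: map_prod_surj_on)
qed

lemma arrow_gP: "arrow C D B A k t = gP (Hom C A D) (\<lambda>w. (\<lambda>f. cmp C w f) ` Hom C A B) (Hom C B D) k t"
  by (simp add: arrow_def gP_def)

lemma arrow_sim_gP: "arrow_sim C D B A k t =
   gP (binom C D A) (\<lambda>w. (\<lambda>f. cls C A (cmp C w f)) ` Hom C A B) (Hom C B D) k t"
  by (simp add: arrow_sim_def gP_def)

lemma kpow: assumes "k \<ge> (2::nat)" "0 < t" shows "2 \<le> k ^ t"
proof -
  have "k ^ 1 \<le> k ^ t" using assms by (intro power_increasing) auto
  then show ?thesis using assms by simp
qed

lemma prod_step:
  fixes C1 :: "('o1, 'm1) cat" and C2 :: "('o2, 'm2) cat"
  assumes c1: "is_category C1" and c2: "is_category C2"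
    and fin2: "\<forall>A\<in>Ob C2. \<forall>B\<in>Ob C2. finite (Hom C2 A B)"
    and k: "k \<ge> 2" and t1: "0 < t1"
    and P1: "\<forall>k\<ge>2. \<forall>B\<in>Ob C1. \<exists>D\<in>Ob C1. arrow C1 D B A1 k t1"
    and P2: "\<forall>k\<ge>2. \<forall>B\<in>Ob C2. \<exists>D\<in>Ob C2. arrow C2 D B A2 k t2"
    and A1: "A1 \<in> Ob C1" and A2: "A2 \<in> Ob C2" and B1: "B1 \<in> Ob C1" and B2: "B2 \<in> Ob C2"
  shows "\<exists>D\<in>Ob (prod_cat C1 C2). arrow (prod_cat C1 C2) D (B1, B2) (A1, A2) k (t1 * t2)"
proof -
  have "\<exists>D\<in>Ob C2. arrow C2 D B2 A2 (k ^ t1) t2" using P2 kpow[OF k t1] B2 by blast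
  then obtain D2 where D2: "D2 \<in> Ob C2" "arrow C2 D2 B2 A2 (k ^ t1) t2" by blast
  define XB where "XB = Hom C2 A2 D2"
  have finXB: "finite XB" using fin2 A2 D2 by (simp add: XB_def)
  define KA where "KA = max 2 (k ^ card XB)"
  have "\<exists>D\<in>Ob C1. arrow C1 D B1 A1 KA t1" using P1 B1 by (simp add: KA_def)
  then obtain D1 where D1: "D1 \<in> Ob C1" "arrow C1 D1 B1 A1 KA t1" by blast
  have "arrow (prod_cat C1 C2) (D1, D2) (B1, B2) (A1, A2) k (t1 * t2)"
    unfolding arrow_def
  proof (intro allI impI)
    fix \<chi> :: "'m1 \<times> 'm2 \<Rightarrow> nat"
    assume col: "\<chi> ` Hom (prod_cat C1 C2) (A1, A2) (D1, D2) \<subseteq> {..<k}"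
    have "\<exists>w1\<in>Hom C1 B1 D1. \<exists>w2\<in>Hom C2 B2 D2.
       finite (\<chi> ` ((\<lambda>f. cmp C1 w1 f) ` Hom C1 A1 B1 \<times> (\<lambda>f. cmp C2 w2 f) ` Hom C2 A2 B2)) \<and>
       card (\<chi> ` ((\<lambda>f. cmp C1 w1 f) ` Hom C1 A1 B1 \<times> (\<lambda>f. cmp C2 w2 f) ` Hom C2 A2 B2)) \<le> t1 * t2"
    proof (rule core[where XA = "Hom C1 A1 D1" and XB = XB and KA = KA and KB = "k ^ t1"
          and WA = "Hom C1 B1 D1" and WB = "Hom C2 B2 D2"
          and TA = "\<lambda>w. (\<lambda>f. cmp C1 w f) ` Hom C1 A1 B1" and TB = "\<lambda>w. (\<lambda>f. cmp C2 w f) ` Hom C2 A2 B2"])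
      show "1 \<le> k" using k by simp
      show "finite XB" by (rule finXB)
      show "gP XB (\<lambda>w. (\<lambda>f. cmp C2 w f) ` Hom C2 A2 B2) (Hom C2 B2 D2) (k ^ t1) t2"
        using D2 by (simp add: arrow_gP XB_def)
      show "k ^ t1 \<le> k ^ t1" by simp
      show "gP (Hom C1 A1 D1) (\<lambda>w. (\<lambda>f. cmp C1 w f) ` Hom C1 A1 B1) (Hom C1 B1 D1) KA t1"
        using D1 by (simp add: arrow_gP)
      show "k ^ card XB \<le> KA" by (simp add: KA_def)
      show "\<forall>w\<in>Hom C1 B1 D1. (\<lambda>f. cmp C1 w f) ` Hom C1 A1 B1 \<subseteq> Hom C1 A1 D1"
        using cat_comp[OF c1 A1 B1 D1(1)] by blast
      show "\<forall>w\<in>Hom C2 B2 D2. (\<lambda>f. cmp C2 w f) ` Hom C2 A2 B2 \<subseteq> XB"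
        using cat_comp[OF c2 A2 B2 D2(1)] by (auto simp: XB_def)
      show "\<chi> ` (Hom C1 A1 D1 \<times> XB) \<subseteq> {..<k}" using col by (simp add: Hom_prod XB_def)
    qed
    then obtain w1 w2 where w1: "w1 \<in> Hom C1 B1 D1" and w2: "w2 \<in> Hom C2 B2 D2" and
      ww: "finite (\<chi> ` ((\<lambda>f. cmp C1 w1 f) ` Hom C1 A1 B1 \<times> (\<lambda>f. cmp C2 w2 f) ` Hom C2 A2 B2)) \<and>
       card (\<chi> ` ((\<lambda>f. cmp C1 w1 f) ` Hom C1 A1 B1 \<times> (\<lambda>f. cmp C2 w2 f) ` Hom C2 A2 B2)) \<le> t1 * t2"
      by blast
    have fe: "(\<lambda>f. cmp (prod_cat C1 C2) (w1, w2) f) = map_prod (cmp C1 w1) (cmp C2 w2)"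
      by (auto simp: prod_cat_def)
    have img: "(\<lambda>f. cmp (prod_cat C1 C2) (w1, w2) f) ` Hom (prod_cat C1 C2) (A1, A2) (B1, B2)
       = (\<lambda>f. cmp C1 w1 f) ` Hom C1 A1 B1 \<times> (\<lambda>f. cmp C2 w2 f) ` Hom C2 A2 B2"
      unfolding fe Hom_prod by (rule map_prod_surj_on) auto
    show "\<exists>w\<in>Hom (prod_cat C1 C2) (B1, B2) (D1, D2).
       finite (\<chi> ` (\<lambda>f. cmp (prod_cat C1 C2) w f) ` Hom (prod_cat C1 C2) (A1, A2) (B1, B2)) \<and>
       card (\<chi> ` (\<lambda>f. cmp (prod_cat C1 C2) w f) ` Hom (prod_cat C1 C2) (A1, A2) (B1, B2)) \<le> t1 * t2"
      by (rule bexI[where x = "(w1, w2)"]) (use img ww w1 w2 in \<open>simp_all add: Hom_prod\<close>)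
  qed
  then show ?thesis using D1 D2 by (auto simp: Ob_prod)
qed

lemma binom_prod: "binom (prod_cat C1 C2) (D1, D2) (A1, A2)
   = (\<lambda>(c1, c2). c1 \<times> c2) ` (binom C1 D1 A1 \<times> binom C2 D2 A2)"
proof -
  have e: "cls (prod_cat C1 C2) (A1, A2) = (\<lambda>(c1, c2). c1 \<times> c2) \<circ> map_prod (cls C1 A1) (cls C2 A2)"
    by (auto simp: cls_prod)
  show ?thesis unfolding binom_def Hom_prod e image_comp[symmetric]
    by (simp add: map_prod_surj_on)
qed

lemma prod_step_sim:
  fixes C1 :: "('o1, 'm1) cat" and C2 :: "('o2, 'm2) cat"
  assumes c1: "is_category C1" and c2: "is_category C2"
    and fin2: "\<forall>A\<in>Ob C2. \<forall>B\<in>Ob C2. finite (Hom C2 A B)"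
    and k: "k \<ge> 2" and t1: "0 < t1"
    and P1: "\<forall>k\<ge>2. \<forall>B\<in>Ob C1. \<exists>D\<in>Ob C1. arrow_sim C1 D B A1 k t1"
    and P2: "\<forall>k\<ge>2. \<forall>B\<in>Ob C2. \<exists>D\<in>Ob C2. arrow_sim C2 D B A2 k t2"
    and A1: "A1 \<in> Ob C1" and A2: "A2 \<in> Ob C2" and B1: "B1 \<in> Ob C1" and B2: "B2 \<in> Ob C2"
  shows "\<exists>D\<in>Ob (prod_cat C1 C2). arrow_sim (prod_cat C1 C2) D (B1, B2) (A1, A2) k (t1 * t2)"
proof -
  have "\<exists>D\<in>Ob C2. arrow_sim C2 D B2 A2 (k ^ t1) t2" using P2 kpow[OF k t1] B2 by blast
  then obtain D2 where D2: "D2 \<in> Ob C2" "arrow_sim C2 D2 B2 A2 (k ^ t1) t2" by blast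
  define XB where "XB = binom C2 D2 A2"
  have finXB: "finite XB" using fin2 A2 D2 by (simp add: XB_def binom_def)
  define KA where "KA = max 2 (k ^ card XB)"
  have "\<exists>D\<in>Ob C1. arrow_sim C1 D B1 A1 KA t1" using P1 B1 by (simp add: KA_def)
  then obtain D1 where D1: "D1 \<in> Ob C1" "arrow_sim C1 D1 B1 A1 KA t1" by blast
  define g where "g = (\<lambda>(c1::'m1 set, c2::'m2 set). c1 \<times> c2)"
  have "arrow_sim (prod_cat C1 C2) (D1, D2) (B1, B2) (A1, A2) k (t1 * t2)"
    unfolding arrow_sim_def
  proof (intro allI impI)
    fix \<chi> :: "('m1 \<times> 'm2) set \<Rightarrow> nat"
    assume col: "\<chi> ` binom (prod_cat C1 C2) (D1, D2) (A1, A2) \<subseteq> {..<k}"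
    define TA where "TA = (\<lambda>w. (\<lambda>f. cls C1 A1 (cmp C1 w f)) ` Hom C1 A1 B1)"
    define TB where "TB = (\<lambda>w. (\<lambda>f. cls C2 A2 (cmp C2 w f)) ` Hom C2 A2 B2)"
    have "\<exists>w1\<in>Hom C1 B1 D1. \<exists>w2\<in>Hom C2 B2 D2.
       finite ((\<chi> \<circ> g) ` (TA w1 \<times> TB w2)) \<and> card ((\<chi> \<circ> g) ` (TA w1 \<times> TB w2)) \<le> t1 * t2"
    proof (rule core[where XA = "binom C1 D1 A1" and XB = XB and KA = KA and KB = "k ^ t1"
          and WA = "Hom C1 B1 D1" and WB = "Hom C2 B2 D2" and TA = TA and TB = TB])
      show "1 \<le> k" using k by simp
      show "finite XB" by (rule finXB)
      show "gP XB TB (Hom C2 B2 D2) (k ^ t1) t2"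
        using D2 by (simp add: arrow_sim_gP XB_def TB_def)
      show "k ^ t1 \<le> k ^ t1" by simp
      show "gP (binom C1 D1 A1) TA (Hom C1 B1 D1) KA t1"
        using D1 by (simp add: arrow_sim_gP TA_def)
      show "k ^ card XB \<le> KA" by (simp add: KA_def)
      show "\<forall>w\<in>Hom C1 B1 D1. TA w \<subseteq> binom C1 D1 A1"
        using cat_comp[OF c1 A1 B1 D1(1)] by (auto simp: TA_def binom_def)
      show "\<forall>w\<in>Hom C2 B2 D2. TB w \<subseteq> XB"
        using cat_comp[OF c2 A2 B2 D2(1)] by (auto simp: TB_def XB_def binom_def)
      show "(\<chi> \<circ> g) ` (binom C1 D1 A1 \<times> XB) \<subseteq> {..<k}"
        using col by (simp only: binom_prod XB_def g_def image_comp)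
    qed
    then obtain w1 w2 where w1: "w1 \<in> Hom C1 B1 D1" and w2: "w2 \<in> Hom C2 B2 D2" and
      ww: "finite ((\<chi> \<circ> g) ` (TA w1 \<times> TB w2)) \<and> card ((\<chi> \<circ> g) ` (TA w1 \<times> TB w2)) \<le> t1 * t2"
      by blast
    have fe: "(\<lambda>f. cls (prod_cat C1 C2) (A1, A2) (cmp (prod_cat C1 C2) (w1, w2) f))
       = g \<circ> map_prod (\<lambda>f. cls C1 A1 (cmp C1 w1 f)) (\<lambda>f. cls C2 A2 (cmp C2 w2 f))"
      by (auto simp: g_def cmp_prod cls_prod)
    have img: "\<chi> ` (\<lambda>f. cls (prod_cat C1 C2) (A1, A2) (cmp (prod_cat C1 C2) (w1, w2) f))
         ` Hom (prod_cat C1 C2) (A1, A2) (B1, B2) = (\<chi> \<circ> g) ` (TA w1 \<times> TB w2)"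
      unfolding fe Hom_prod image_comp[symmetric]
      by (simp add: map_prod_surj_on TA_def TB_def)
    show "\<exists>w\<in>Hom (prod_cat C1 C2) (B1, B2) (D1, D2).
       finite (\<chi> ` (\<lambda>f. cls (prod_cat C1 C2) (A1, A2) (cmp (prod_cat C1 C2) w f)) ` Hom (prod_cat C1 C2) (A1, A2) (B1, B2)) \<and>
       card (\<chi> ` (\<lambda>f. cls (prod_cat C1 C2) (A1, A2) (cmp (prod_cat C1 C2) w f)) ` Hom (prod_cat C1 C2) (A1, A2) (B1, B2)) \<le> t1 * t2"
      by (rule bexI[where x = "(w1, w2)"]) (use img ww w1 w2 in \<open>simp_all add: Hom_prod\<close>)
  qed
  then show ?thesis using D1 D2 by (auto simp: Ob_prod)
qed

lemma rd_fin:
  assumes "ramsey_deg C A \<noteq> \<infinity>"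
  shows "\<exists>t. ramsey_deg C A = enat t \<and> 0 < t \<and> (\<forall>k\<ge>2. \<forall>B\<in>Ob C. \<exists>D\<in>Ob C. arrow C D B A k t)"
proof -
  let ?P = "\<lambda>n. 0 < n \<and> (\<forall>k\<ge>2. \<forall>B\<in>Ob C. \<exists>D\<in>Ob C. arrow C D B A k n)"
  have ex: "\<exists>n. ?P n" using assms by (auto simp: ramsey_deg_def Let_def split: if_splits)
  have "ramsey_deg C A = enat (LEAST n. ?P n)" using ex by (simp add: ramsey_deg_def Let_def)
  moreover have "?P (LEAST n. ?P n)" using ex by (rule LeastI_ex)
  ultimately show ?thesis by blast
qed

lemma rd_le:
  assumes "0 < t" "\<forall>k\<ge>2. \<forall>B\<in>Ob C. \<exists>D\<in>Ob C. arrow C D B A k t"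
  shows "ramsey_deg C A \<le> enat t"
proof -
  let ?P = "\<lambda>n. 0 < n \<and> (\<forall>k\<ge>2. \<forall>B\<in>Ob C. \<exists>D\<in>Ob C. arrow C D B A k n)"
  have p: "?P t" using assms by blast
  then have ex: "\<exists>n. ?P n" by blast
  have "ramsey_deg C A = enat (LEAST n. ?P n)" using ex by (simp add: ramsey_deg_def Let_def)
  moreover have "(LEAST n. ?P n) \<le> t" using p by (rule Least_le)
  ultimately show ?thesis by simp
qed

lemma rds_cases:
  "ramsey_deg_sim C A = \<infinity> \<or>
   (\<exists>t. ramsey_deg_sim C A = enat t \<and> 0 < t \<and> (\<forall>k\<ge>2. \<forall>B\<in>Ob C. \<exists>D\<in>Ob C. arrow_sim C D B A k t))"
proof (cases "ramsey_deg_sim C A = \<infinity>")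
  case True then show ?thesis by simp
next
  case False
  let ?P = "\<lambda>n. 0 < n \<and> (\<forall>k\<ge>2. \<forall>B\<in>Ob C. \<exists>D\<in>Ob C. arrow_sim C D B A k n)"
  have ex: "\<exists>n. ?P n" using False by (auto simp: ramsey_deg_sim_def Let_def split: if_splits)
  have "ramsey_deg_sim C A = enat (LEAST n. ?P n)" using ex by (simp add: ramsey_deg_sim_def Let_def)
  moreover have "?P (LEAST n. ?P n)" using ex by (rule LeastI_ex)
  ultimately show ?thesis by blast
qed

lemma rds_le:
  assumes "0 < t" "\<forall>k\<ge>2. \<forall>B\<in>Ob C. \<exists>D\<in>Ob C. arrow_sim C D B A k t"
  shows "ramsey_deg_sim C A \<le> enat t"
proof -
  let ?P = "\<lambda>n. 0 < n \<and> (\<forall>k\<ge>2. \<forall>B\<in>Ob C. \<exists>D\<in>Ob C. arrow_sim C D B A k n)"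
  have p: "?P t" using assms by blast
  then have ex: "\<exists>n. ?P n" by blast
  have "ramsey_deg_sim C A = enat (LEAST n. ?P n)" using ex by (simp add: ramsey_deg_sim_def Let_def)
  moreover have "(LEAST n. ?P n) \<le> t" using p by (rule Least_le)
  ultimately show ?thesis by simp
qed

theorem theorem3p3:
  fixes C1 :: "('o1, 'm1) cat" and C2 :: "('o2, 'm2) cat"
  assumes "is_category C1" and "is_category C2"
    and "all_mono C1" and "all_mono C2"
    and "\<forall>A\<in>Ob C1. \<forall>B\<in>Ob C1. finite (Hom C1 A B)"
    and "\<forall>A\<in>Ob C2. \<forall>B\<in>Ob C2. finite (Hom C2 A B)"
    and "\<forall>A\<in>Ob C1. ramsey_deg C1 A \<noteq> \<infinity>"
    and "\<forall>A\<in>Ob C2. ramsey_deg C2 A \<noteq> \<infinity>"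
    and "A1 \<in> Ob C1" and "A2 \<in> Ob C2"
  shows "ramsey_deg (prod_cat C1 C2) (A1, A2) \<le> ramsey_deg C1 A1 * ramsey_deg C2 A2
    \<and> ramsey_deg_sim (prod_cat C1 C2) (A1, A2) \<le> ramsey_deg_sim C1 A1 * ramsey_deg_sim C2 A2"
proof
  have f1: "ramsey_deg C1 A1 \<noteq> \<infinity>" using assms(7,9) by blast
  have f2: "ramsey_deg C2 A2 \<noteq> \<infinity>" using assms(8,10) by blast
  obtain t1 where t1: "ramsey_deg C1 A1 = enat t1" "0 < t1"
      "\<forall>k\<ge>2. \<forall>B\<in>Ob C1. \<exists>D\<in>Ob C1. arrow C1 D B A1 k t1"
    using rd_fin[OF f1] by (elim exE conjE)
  obtain t2 where t2: "ramsey_deg C2 A2 = enat t2" "0 < t2"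
      "\<forall>k\<ge>2. \<forall>B\<in>Ob C2. \<exists>D\<in>Ob C2. arrow C2 D B A2 k t2"
    using rd_fin[OF f2] by (elim exE conjE)
  have "\<forall>k\<ge>2. \<forall>B\<in>Ob (prod_cat C1 C2). \<exists>D\<in>Ob (prod_cat C1 C2).
           arrow (prod_cat C1 C2) D B (A1, A2) k (t1 * t2)"
  proof (intro allI impI ballI)
    fix k :: nat and B assume k: "2 \<le> k" and B: "B \<in> Ob (prod_cat C1 C2)"
    obtain B1 B2 where BB: "B = (B1, B2)" "B1 \<in> Ob C1" "B2 \<in> Ob C2" using B by (auto simp: Ob_prod)
    show "\<exists>D\<in>Ob (prod_cat C1 C2). arrow (prod_cat C1 C2) D B (A1, A2) k (t1 * t2)"
      unfolding BB(1)
      by (rule prod_step[OF assms(1,2,6) k t1(2) t1(3) t2(3) assms(9,10) BB(2,3)])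
  qed
  then have "ramsey_deg (prod_cat C1 C2) (A1, A2) \<le> enat (t1 * t2)"
    using t1(2) t2(2) by (intro rd_le) auto
  then show "ramsey_deg (prod_cat C1 C2) (A1, A2) \<le> ramsey_deg C1 A1 * ramsey_deg C2 A2"
    using t1(1) t2(1) by simp
next
  have nz2: "ramsey_deg_sim C2 A2 \<noteq> 0" using rds_cases[of C2 A2]
    by (elim disjE exE conjE) (simp_all add: zero_enat_def)
  from rds_cases[of C1 A1]
  show "ramsey_deg_sim (prod_cat C1 C2) (A1, A2) \<le> ramsey_deg_sim C1 A1 * ramsey_deg_sim C2 A2"
  proof (elim disjE exE conjE)
    assume inf1: "ramsey_deg_sim C1 A1 = \<infinity>"
    have "ramsey_deg_sim C1 A1 * ramsey_deg_sim C2 A2 = \<infinity>"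
      using inf1 nz2 by (simp add: imult_is_infinity)
    then show ?thesis by simp
  next
    fix t1 assume t1: "ramsey_deg_sim C1 A1 = enat t1" "0 < t1"
        "\<forall>k\<ge>2. \<forall>B\<in>Ob C1. \<exists>D\<in>Ob C1. arrow_sim C1 D B A1 k t1"
    from rds_cases[of C2 A2] show ?thesis
    proof (elim disjE exE conjE)
      assume inf2: "ramsey_deg_sim C2 A2 = \<infinity>"
      have "ramsey_deg_sim C1 A1 * ramsey_deg_sim C2 A2 = \<infinity>"
        using inf2 t1(1,2) by (simp add: imult_is_infinity zero_enat_def)
      then show ?thesis by simp
    next
      fix t2 assume t2: "ramsey_deg_sim C2 A2 = enat t2" "0 < t2"
        "\<forall>k\<ge>2. \<forall>B\<in>Ob C2. \<exists>D\<in>Ob C2. arrow_sim C2 D B A2 k t2"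
      have "\<forall>k\<ge>2. \<forall>B\<in>Ob (prod_cat C1 C2). \<exists>D\<in>Ob (prod_cat C1 C2).
               arrow_sim (prod_cat C1 C2) D B (A1, A2) k (t1 * t2)"
      proof (intro allI impI ballI)
        fix k :: nat and B assume k: "2 \<le> k" and B: "B \<in> Ob (prod_cat C1 C2)"
        obtain B1 B2 where BB: "B = (B1, B2)" "B1 \<in> Ob C1" "B2 \<in> Ob C2" using B by (auto simp: Ob_prod)
        show "\<exists>D\<in>Ob (prod_cat C1 C2). arrow_sim (prod_cat C1 C2) D B (A1, A2) k (t1 * t2)"
          unfolding BB(1)
          by (rule prod_step_sim[OF assms(1,2,6) k t1(2) t1(3) t2(3) assms(9,10) BB(2,3)])
      qed
      then have "ramsey_deg_sim (prod_cat C1 C2) (A1, A2) \<le> enat (t1 * t2)"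
        using t1(2) t2(2) by (intro rds_le) auto
      then show ?thesis using t1(1) t2(1) by simp
    qed
  qed
qed

end
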